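(* Let $(X,\mathrm{dist})$ be a metric space, $\Sigma$ a metric space, and $\{U_\sigma(t,\tau)\}_{\sigma\in\Sigma}$ a family of processes on $X$. If $K_1,K_2\subset X$ are compact uniformly attracting sets for the family, then $K_1\cap K_2$ is a compact uniformly attracting set for the family.
   Context: A process on $X$ is a family of maps $U(t,\tau):X\to X$, indexed by reals $t\ge\tau$, with $U(\tau,\tau)=\mathrm{id}_X$ and $U(t,\tau)=U(t,s)U(s,\tau)$ for $t\ge s\ge\tau$; no continuity is assumed. For nonempty $B,C\subset X$, $\delta_X(B,C)=\sup_{x\in B}\inf_{\xi\in C}\mathrm{dist}(x,\xi)$. A set $K\subset X$ is uniformly attracting if for every bounded $C\subset X$, $\lim_{t-\tau\to\infty}\sup_{\sigma\in\Sigma}\delta_X(U_\sigma(t,\tau)C,K)=0$. *)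

theory Defs
  imports "HOL-Analysis.Analysis"
begin

definition process :: "(real \<Rightarrow> real \<Rightarrow> 'a \<Rightarrow> 'a) \<Rightarrow> bool" where
  "process U \<longleftrightarrow> (\<forall>\<tau>. U \<tau> \<tau> = id) \<and>
     (\<forall>t s \<tau>. \<tau> \<le> s \<and> s \<le> t \<longrightarrow> U t \<tau> = U t s \<circ> U s \<tau>)"

text \<open>For nonempty C, infdist x C is exactly
  the infimum of dist x xi over xi in C.\<close>
definition hsemidist :: "'a::metric_space set \<Rightarrow> 'a set \<Rightarrow> ereal" where
  "hsemidist B C = (SUP x\<in>B. ereal (infdist x C))"

text \<open>K is uniformly attracting for the family U (indexed by all sigma of type 's):
  K nonempty (needed for delta to be defined) and for every nonempty bounded C,
  sup over sigma of delta(U sigma t tau C, K) tends to 0 as t - tau tends to infinity.\<close>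
definition unif_attracting :: "('s \<Rightarrow> real \<Rightarrow> real \<Rightarrow> 'a::metric_space \<Rightarrow> 'a) \<Rightarrow> 'a set \<Rightarrow> bool" where
  "unif_attracting U K \<longleftrightarrow> K \<noteq> {} \<and>
     (\<forall>C. bounded C \<and> C \<noteq> {} \<longrightarrow>
        (\<forall>\<epsilon>>0. \<exists>T. \<forall>t \<tau>. \<tau> \<le> t \<and> t - \<tau> \<ge> T \<longrightarrow>
            (SUP \<sigma>. hsemidist (U \<sigma> t \<tau> ` C) K) \<le> ereal \<epsilon>))"

end

theory Submission
  imports Defs
begin

lemma infdist_lessD:
  assumes "A \<noteq> {}" "infdist x A < d"
  shows "\<exists>a\<in>A. dist x a < d"
  using assms by (simp add: infdist_notempty cINF_less_iff)

lemma close_both: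
  fixes K1 K2 :: "'a::metric_space set"
  assumes "compact K1" "compact K2" "K1 \<noteq> {}" "K2 \<noteq> {}" "e > 0"
  shows "\<exists>d>0. \<forall>y. infdist y K1 < d \<and> infdist y K2 < d \<longrightarrow> (\<exists>z\<in>K1 \<inter> K2. dist y z < e)"
proof (rule ccontr)
  assume neg: "\<not> ?thesis"
  then have "\<forall>n::nat. \<exists>y. infdist y K1 < 1/(real n+1) \<and> infdist y K2 < 1/(real n+1) \<and> (\<forall>z\<in>K1 \<inter> K2. dist y z \<ge> e)"
  proof (intro allI)
    fix n :: nat
    have "1/(real n+1) > 0" by simp
    then show "\<exists>y. infdist y K1 < 1/(real n+1) \<and> infdist y K2 < 1/(real n+1) \<and> (\<forall>z\<in>K1 \<inter> K2. dist y z \<ge> e)"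
      using neg by (metis not_le)
  qed
  then obtain y where y: "\<And>n. infdist (y n) K1 < 1/(real n+1)" "\<And>n. infdist (y n) K2 < 1/(real n+1)"
      "\<And>n z. z \<in> K1 \<inter> K2 \<Longrightarrow> dist (y n) z \<ge> e"
    by metis
  have "\<forall>n. \<exists>a\<in>K1. dist (y n) a < 1/(real n+1)"
    using y(1) infdist_lessD[OF assms(3)] by blast
  then obtain a where a: "\<And>n. a n \<in> K1" "\<And>n. dist (y n) (a n) < 1/(real n+1)" by metis
  have "\<forall>n. \<exists>b\<in>K2. dist (y n) b < 1/(real n+1)"
    using y(2) infdist_lessD[OF assms(4)] by blast
  then obtain b where b: "\<And>n. b n \<in> K2" "\<And>n. dist (y n) (b n) < 1/(real n+1)" by metis
  obtain l r where l: "l \<in> K1" "strict_mono r" "(a \<circ> r) \<longlonglongrightarrow> l"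
    using seq_compactE[OF compact_imp_seq_compact[OF assms(1)], of a] a(1) by blast
  have inv: "(\<lambda>n. 1/(real (r n)+1)) \<longlonglongrightarrow> 0"
  proof -
    have "(\<lambda>n. 1/(real n+1)) \<longlonglongrightarrow> (0::real)"
      using LIMSEQ_inverse_real_of_nat by (simp add: inverse_eq_divide add.commute)
    then show ?thesis using LIMSEQ_subseq_LIMSEQ[OF _ l(2)] by (simp add: o_def)
  qed
  have ya: "(\<lambda>n. dist (y (r n)) (a (r n))) \<longlonglongrightarrow> 0"
    by (rule tendsto_sandwich[of "\<lambda>_. 0" _ _ "\<lambda>n. 1/(real (r n)+1)"])
       (use a(2) in \<open>auto intro!: always_eventually less_imp_le inv\<close>)
  have yl: "(\<lambda>n. y (r n)) \<longlonglongrightarrow> l"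
  proof -
    have "(\<lambda>n. dist (y (r n)) l) \<longlonglongrightarrow> 0"
    proof (rule tendsto_sandwich[of "\<lambda>_. 0" _ _ "\<lambda>n. dist (y (r n)) (a (r n)) + dist (a (r n)) l"])
      show "\<forall>\<^sub>F n in sequentially. 0 \<le> dist (y (r n)) l" by simp
      show "\<forall>\<^sub>F n in sequentially. dist (y (r n)) l \<le> dist (y (r n)) (a (r n)) + dist (a (r n)) l"
        by (rule always_eventually) (simp add: dist_triangle)
      have "(\<lambda>n. dist (a (r n)) l) \<longlonglongrightarrow> 0" using l(3) by (intro tendsto_dist_iff[THEN iffD1]) (simp add: o_def)
      then show "(\<lambda>n. dist (y (r n)) (a (r n)) + dist (a (r n)) l) \<longlonglongrightarrow> 0"
        using tendsto_add[OF ya] by simp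
    qed simp
    then show ?thesis by (rule tendsto_dist_iff[THEN iffD2])
  qed
  have yb: "(\<lambda>n. dist (y (r n)) (b (r n))) \<longlonglongrightarrow> 0"
    by (rule tendsto_sandwich[of "\<lambda>_. 0" _ _ "\<lambda>n. 1/(real (r n)+1)"])
       (use b(2) in \<open>auto intro!: always_eventually less_imp_le inv\<close>)
  have bl: "(\<lambda>n. b (r n)) \<longlonglongrightarrow> l"
  proof -
    have "(\<lambda>n. dist (b (r n)) l) \<longlonglongrightarrow> 0"
    proof (rule tendsto_sandwich[of "\<lambda>_. 0" _ _ "\<lambda>n. dist (y (r n)) (b (r n)) + dist (y (r n)) l"])
      show "\<forall>\<^sub>F n in sequentially. dist (b (r n)) l \<le> dist (y (r n)) (b (r n)) + dist (y (r n)) l"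
        by (rule always_eventually) (simp add: dist_triangle3)
      have "(\<lambda>n. dist (y (r n)) l) \<longlonglongrightarrow> 0" using yl by (rule tendsto_dist_iff[THEN iffD1])
      then show "(\<lambda>n. dist (y (r n)) (b (r n)) + dist (y (r n)) l) \<longlonglongrightarrow> 0"
        using tendsto_add[OF yb] by simp
    qed simp_all
    then show ?thesis by (rule tendsto_dist_iff[THEN iffD2])
  qed
  have "l \<in> K2"
    by (rule closed_sequentially[OF compact_imp_closed[OF assms(2)], of "\<lambda>n. b (r n)"]) (use b(1) bl in auto)
  then have lK: "l \<in> K1 \<inter> K2" using l(1) by blast
  have "(\<lambda>n. dist (y (r n)) l) \<longlonglongrightarrow> 0" using yl by (rule tendsto_dist_iff[THEN iffD1])
  then have "\<forall>\<^sub>F n in sequentially. dist (y (r n)) l < e"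
    by (rule order_tendstoD(2)[OF _ assms(5)])
  then obtain N where "\<forall>n\<ge>N. dist (y (r n)) l < e" unfolding eventually_sequentially by blast
  then have "dist (y (r N)) l < e" by simp
  define n where "n = N"
  have "dist (y (r n)) l < e" using \<open>dist (y (r N)) l < e\<close> n_def by simp
  moreover have "e \<le> dist (y (r n)) l" using y(3) lK by blast
  ultimately show False by simp
qed

lemma attrD:
  assumes "unif_attracting U K" "bounded C" "C \<noteq> {}" "(e::real) > 0"
  shows "\<exists>T. \<forall>t \<tau> \<sigma> x. \<tau> \<le> t \<and> t - \<tau> \<ge> T \<and> x \<in> C \<longrightarrow> infdist (U \<sigma> t \<tau> x) K \<le> e"
proof -
  obtain T where T: "\<And>t \<tau>. \<tau> \<le> t \<and> t - \<tau> \<ge> T \<Longrightarrow> (SUP \<sigma>. hsemidist (U \<sigma> t \<tau> ` C) K) \<le> ereal e"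
  proof -
    have "\<forall>\<epsilon>>0. \<exists>T. \<forall>t \<tau>. \<tau> \<le> t \<and> t - \<tau> \<ge> T \<longrightarrow>
            (SUP \<sigma>. hsemidist (U \<sigma> t \<tau> ` C) K) \<le> ereal \<epsilon>"
      using assms(1,2,3) unfolding unif_attracting_def by simp
    then have "\<exists>T. \<forall>t \<tau>. \<tau> \<le> t \<and> t - \<tau> \<ge> T \<longrightarrow>
            (SUP \<sigma>. hsemidist (U \<sigma> t \<tau> ` C) K) \<le> ereal e" using assms(4) by simp
    then show ?thesis using that by metis
  qed
  have "infdist (U \<sigma> t \<tau> x) K \<le> e" if "\<tau> \<le> t" "t - \<tau> \<ge> T" "x \<in> C" for t \<tau> \<sigma> x
  proof -
    have "(SUP \<sigma>. hsemidist (U \<sigma> t \<tau> ` C) K) \<le> ereal e" using T that(1,2) by simp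
    then have "hsemidist (U \<sigma> t \<tau> ` C) K \<le> ereal e" by (simp add: SUP_le_iff)
    then have "ereal (infdist (U \<sigma> t \<tau> x) K) \<le> ereal e"
      unfolding hsemidist_def using that(3) by (simp add: SUP_le_iff)
    then show ?thesis by simp
  qed
  then show ?thesis by blast
qed

lemma attrI:
  assumes "\<And>\<sigma> x. x \<in> C \<Longrightarrow> infdist (U \<sigma> t \<tau> x) K \<le> e"
  shows "(SUP \<sigma>. hsemidist (U \<sigma> t \<tau> ` C) K) \<le> ereal e"
  unfolding hsemidist_def using assms by (simp add: SUP_le_iff)

theorem corollary2p8:
  fixes U :: "'s::metric_space \<Rightarrow> real \<Rightarrow> real \<Rightarrow> 'a::metric_space \<Rightarrow> 'a"
    and K1 K2 :: "'a set"
  assumes "\<And>\<sigma>. process (U \<sigma>)"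
    and "compact K1" and "unif_attracting U K1"
    and "compact K2" and "unif_attracting U K2"
  shows "compact (K1 \<inter> K2) \<and> unif_attracting U (K1 \<inter> K2)"
proof -
  have ne1: "K1 \<noteq> {}" and ne2: "K2 \<noteq> {}" using assms(3,5) unfolding unif_attracting_def by auto
  have key: "\<exists>T. \<forall>t \<tau> \<sigma> x. \<tau> \<le> t \<and> t - \<tau> \<ge> T \<and> x \<in> C \<longrightarrow> (\<exists>z\<in>K1 \<inter> K2. dist (U \<sigma> t \<tau> x) z < e)"
    if C: "bounded C" "C \<noteq> {}" and e: "e > 0" for C e
  proof -
    obtain d where d: "d > 0" "\<And>y. infdist y K1 < d \<and> infdist y K2 < d \<Longrightarrow> (\<exists>z\<in>K1 \<inter> K2. dist y z < e)"
      using close_both[OF assms(2,4) ne1 ne2 e] by blast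
    have d2: "d/2 > 0" using d(1) by simp
    obtain T1 where T1: "\<forall>t \<tau> \<sigma> x. \<tau> \<le> t \<and> t - \<tau> \<ge> T1 \<and> x \<in> C \<longrightarrow> infdist (U \<sigma> t \<tau> x) K1 \<le> d/2"
      using attrD[OF assms(3) C d2] by blast
    obtain T2 where T2: "\<forall>t \<tau> \<sigma> x. \<tau> \<le> t \<and> t - \<tau> \<ge> T2 \<and> x \<in> C \<longrightarrow> infdist (U \<sigma> t \<tau> x) K2 \<le> d/2"
      using attrD[OF assms(5) C d2] by blast
    have "(\<exists>z\<in>K1 \<inter> K2. dist (U \<sigma> t \<tau> x) z < e)"
      if "\<tau> \<le> t" "t - \<tau> \<ge> max T1 T2" "x \<in> C" for t \<tau> \<sigma> x
    proof (rule d(2))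
      have "infdist (U \<sigma> t \<tau> x) K1 \<le> d/2" using T1 that by auto
      moreover have "infdist (U \<sigma> t \<tau> x) K2 \<le> d/2" using T2 that by auto
      ultimately show "infdist (U \<sigma> t \<tau> x) K1 < d \<and> infdist (U \<sigma> t \<tau> x) K2 < d"
        using d(1) by linarith
    qed
    then show ?thesis by blast
  qed
  have neI: "K1 \<inter> K2 \<noteq> {}"
  proof -
    obtain T where T: "\<forall>t \<tau> \<sigma> x. \<tau> \<le> t \<and> t - \<tau> \<ge> T \<and> x \<in> {undefined} \<longrightarrow> (\<exists>z\<in>K1 \<inter> K2. dist (U \<sigma> t \<tau> x) z < 1)"
      using key[of "{undefined}" 1] by auto
    have "0 \<le> max 0 T \<and> max 0 T - 0 \<ge> T \<and> undefined \<in> {undefined}" by simp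
    then have "\<exists>z\<in>K1 \<inter> K2. dist (U undefined (max 0 T) 0 undefined) z < 1"
      using T by (elim allE[of _ "max 0 T"] allE[of _ 0] allE[of _ undefined] allE[of _ undefined]) (erule mp)
    then show ?thesis by auto
  qed
  have "unif_attracting U (K1 \<inter> K2)"
    unfolding unif_attracting_def
  proof (intro conjI neI allI impI)
    fix C :: "'a set" and e :: real
    assume C: "bounded C \<and> C \<noteq> {}" and e: "0 < e"
    obtain T where T: "\<forall>t \<tau> \<sigma> x. \<tau> \<le> t \<and> t - \<tau> \<ge> T \<and> x \<in> C \<longrightarrow> (\<exists>z\<in>K1 \<inter> K2. dist (U \<sigma> t \<tau> x) z < e)"
      using key[of C e] C e by meson
    show "\<exists>T. \<forall>t \<tau>. \<tau> \<le> t \<and> T \<le> t - \<tau> \<longrightarrow> (SUP \<sigma>. hsemidist (U \<sigma> t \<tau> ` C) (K1 \<inter> K2)) \<le> ereal e"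
    proof (intro exI allI impI attrI)
      fix t \<tau> \<sigma> x assume tt: "\<tau> \<le> t \<and> T \<le> t - \<tau>" and x: "x \<in> C"
      have "\<exists>z\<in>K1 \<inter> K2. dist (U \<sigma> t \<tau> x) z < e" using T tt x by simp
      then obtain z where "z \<in> K1 \<inter> K2" "dist (U \<sigma> t \<tau> x) z < e" by blast
      then show "infdist (U \<sigma> t \<tau> x) (K1 \<inter> K2) \<le> e"
        using infdist_le[of z "K1 \<inter> K2" "U \<sigma> t \<tau> x"] by linarith
    qed
  qed
  moreover have "compact (K1 \<inter> K2)" using assms(2,4) by (rule compact_Int)
  ultimately show ?thesis by blast
qed

end
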